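(* Let $P(t,q)=\log\big(\sum_{n=1}^\infty 2^{-nt}e^{2^nq}\big)$ and $D_1=\{(t,q):t\ge0,\ q<0\}$. For $(t,q)\in D_1$, $$\frac{\partial P}{\partial q}(t,q)=\frac{\sum_{n\ge1}2^{-n(t-1)}e^{2^nq}}{\sum_{n\ge1}2^{-nt}e^{2^nq}}.$$ Consequently: (1) for fixed $0<t\le1$, $\lim_{q\to0^-}\frac{\partial P}{\partial q}(t,q)=\infty$; (2) $\lim_{(t,q)\to(0,0)}\frac{\partial P}{\partial q}(t,q)=\infty$ (with $(t,q)\in D_1$); (3) for $t\ge0$ and $q<0$, $\frac{\partial P}{\partial q}(t,q)>2$, and for fixed $t\ge0$, $\lim_{q\to-\infty}\frac{\partial P}{\partial q}(t,q)=2$. *)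

theory Defs
  imports "HOL-Analysis.Analysis"
begin

text \<open>The series sum_{n>=1} 2^(-n t) e^(2^n q), indexed by Suc n so that n runs over 1,2,3,...\<close>
definition Zsum :: "real \<Rightarrow> real \<Rightarrow> real" where
  "Zsum t q = (\<Sum>n. 2 powr (- real (Suc n) * t) * exp (2 ^ Suc n * q))"

definition P :: "real \<Rightarrow> real \<Rightarrow> real" where
  "P t q = ln (Zsum t q)"

definition Zsum1 :: "real \<Rightarrow> real \<Rightarrow> real" where
  "Zsum1 t q = (\<Sum>n. 2 powr (- real (Suc n) * (t - 1)) * exp (2 ^ Suc n * q))"

definition dPdq :: "real \<Rightarrow> real \<Rightarrow> real" where
  "dPdq t q = deriv (\<lambda>q'. P t q') q"

definition D1 :: "(real \<times> real) set" where
  "D1 = {(t, q). t \<ge> 0 \<and> q < 0}"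

end

theory Submission imports Defs begin

definition a :: "real \<Rightarrow> real \<Rightarrow> nat \<Rightarrow> real" where
  "a t q n = 2 powr (- real (Suc n) * t) * exp (2 ^ Suc n * q)"

lemma Zsum_a: "Zsum t q = suminf (a t q)"
  unfolding Zsum_def a_def by simp

lemma Zsum1_a: "Zsum1 t q = suminf (\<lambda>n. 2 ^ Suc n * a t q n)"
proof -
  have "2 powr (- real (Suc n) * (t - 1)) = 2 ^ Suc n * 2 powr (- real (Suc n) * t)" for n
  proof -
    have "2 powr (- real (Suc n) * (t - 1)) = 2 powr (real (Suc n)) * 2 powr (- real (Suc n) * t)"
      by (simp add: powr_add[symmetric] algebra_simps)
    moreover have "2 powr real (Suc n) = (2::real) ^ Suc n" by (rule powr_realpow) simp
    ultimately show ?thesis by simp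
  qed
  then show ?thesis unfolding Zsum1_def a_def by (simp add: mult.assoc)
qed

lemma sq_le_exp: "(u::real) \<ge> 0 \<Longrightarrow> u^2 \<le> 4 * exp u"
proof -
  assume u: "u \<ge> 0"
  have "u/2 \<le> exp (u/2)" using exp_ge_add_one_self[of "u/2"] by linarith
  then have "(u/2)^2 \<le> exp (u/2) ^ 2" using u by (intro power_mono) auto
  also have "exp (u/2) ^ 2 = exp u" by (simp add: exp_double[symmetric] power2_eq_square exp_add[symmetric])
  finally show ?thesis by (simp add: power_divide)
qed

lemma cexp_bound: "(c::real) > 0 \<Longrightarrow> q < 0 \<Longrightarrow> c * exp (c * q) \<le> 4 / (c * q^2)"
proof -
  assume c: "c > 0" and q: "q < 0"
  have "(- c * q)^2 \<le> 4 * exp (- c * q)" using c q mult_pos_neg[of c q] by (intro sq_le_exp) linarith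
  then have "c^2 * q^2 * exp (c*q) \<le> 4 * (exp (-c*q) * exp (c*q))"
    by (simp add: power_mult_distrib mult_right_mono)
  also have "exp (-c*q) * exp (c*q) = 1" by (simp add: exp_add[symmetric])
  finally have "c^2 * q^2 * exp (c*q) \<le> 4" by simp
  moreover have "c * q^2 > 0" using c q by simp
  ultimately show ?thesis by (simp add: field_simps power2_eq_square)
qed

lemma summable_exp: "q < 0 \<Longrightarrow> summable (\<lambda>n. 2 ^ Suc n * exp (2 ^ Suc n * (q::real)))"
proof -
  assume q: "q < 0"
  show ?thesis
  proof (rule summable_comparison_test')
    show "summable (\<lambda>n. 4 / q^2 * (1/2) ^ Suc n)"
      by (intro summable_mult summable_Suc_iff[THEN iffD2] summable_geometric) auto
    fix n
    have "2 ^ Suc n * exp (2 ^ Suc n * q) \<le> 4 / (2 ^ Suc n * q^2)"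
      using q by (intro cexp_bound) auto
    also have "\<dots> = 4 / q^2 * (1/2) ^ Suc n" by (simp add: power_one_over field_simps)
    finally show "norm (2 ^ Suc n * exp (2 ^ Suc n * q)) \<le> 4 / q^2 * (1/2) ^ Suc n" by simp
  qed
qed

lemma a_nonneg: "a t q n \<ge> 0" unfolding a_def by simp
lemma a_pos: "a t q n > 0" unfolding a_def by simp

lemma a_le: "t \<ge> 0 \<Longrightarrow> a t q n \<le> exp (2 ^ Suc n * q)"
proof -
  assume t: "t \<ge> 0"
  have "- real (Suc n) * t \<le> 0" using t by (simp add: mult_nonpos_nonneg)
  then have "2 powr (- real (Suc n) * t) \<le> 2 powr 0" by (intro powr_mono) auto
  then have "2 powr (- real (Suc n) * t) \<le> 1" by simp
  then show ?thesis unfolding a_def using mult_right_mono[of _ 1 "exp (2 ^ Suc n * q)"] by simp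
qed

lemma summable_a2: "t \<ge> 0 \<Longrightarrow> q < 0 \<Longrightarrow> summable (\<lambda>n. 2 ^ Suc n * a t q n)"
  apply (rule summable_comparison_test'[OF summable_exp[of q]], assumption)
  using a_le a_nonneg by (simp add: mult_left_mono)

lemma summable_a: assumes "t \<ge> 0" "q < 0" shows "summable (a t q)"
proof (rule summable_comparison_test'[OF summable_a2[OF assms]])
  fix n
  have "(1::real) \<le> 2 ^ Suc n" by (rule one_le_power) simp
  then have "1 * a t q n \<le> 2 ^ Suc n * a t q n" by (intro mult_right_mono a_nonneg)
  then show "norm (a t q n) \<le> 2 ^ Suc n * a t q n" using a_nonneg by simp
qed

lemma Zsum_pos: "t \<ge> 0 \<Longrightarrow> q < 0 \<Longrightarrow> Zsum t q > 0"
  unfolding Zsum_a using suminf_pos2[OF summable_a a_nonneg a_pos] by blast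


lemma Zsum_deriv:
  assumes t: "t \<ge> 0" and q: "q < 0"
  shows "(Zsum t has_field_derivative Zsum1 t q) (at q)"
proof -
  define S where "S = {2*q<..<q/2}"
  have qS: "q \<in> S" using q by (simp add: S_def)
  have oS: "open S" by (simp add: S_def)
  have "\<exists>g. \<forall>x\<in>S. (\<lambda>n. a t x n) sums g x \<and>
      (g has_field_derivative (\<Sum>i. 2 ^ Suc i * a t x i)) (at x within S)"
  proof (rule has_field_derivative_series[where f' = "\<lambda>n x. 2 ^ Suc n * a t x n"])
    show "convex S" by (simp add: S_def)
    show "q \<in> S" by fact
    show "summable (\<lambda>n. a t q n)" using summable_a[OF t q] by simp
    fix n x assume "x \<in> S"
    show "((\<lambda>x. a t x n) has_field_derivative 2 ^ Suc n * a t x n) (at x within S)"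
      unfolding a_def by (auto intro!: derivative_eq_intros)
  next
    show "uniform_limit S (\<lambda>n x. \<Sum>i<n. 2 ^ Suc i * a t x i)
        (\<lambda>x. \<Sum>i. 2 ^ Suc i * a t x i) sequentially"
    proof (rule Weierstrass_m_test)
      show "summable (\<lambda>n. 2 ^ Suc n * exp (2 ^ Suc n * (q/2)))" using q by (intro summable_exp) simp
      fix n x assume "x \<in> S"
      then have x: "x < q/2" by (simp add: S_def)
      have "a t x n \<le> exp (2 ^ Suc n * x)" by (rule a_le[OF t])
      also have "\<dots> \<le> exp (2 ^ Suc n * (q/2))" using x by simp
      finally show "norm (2 ^ Suc n * a t x n) \<le> 2 ^ Suc n * exp (2 ^ Suc n * (q/2))"
        using a_nonneg[of t x n] by simp
    qed
  qed
  then obtain g where g: "\<And>x. x \<in> S \<Longrightarrow> (\<lambda>n. a t x n) sums g x \<and>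
      (g has_field_derivative (\<Sum>i. 2 ^ Suc i * a t x i)) (at x within S)" by blast
  have "(g has_field_derivative Zsum1 t q) (at q)"
    using g[OF qS] at_within_open[OF qS oS] by (simp add: Zsum1_a)
  moreover have "\<And>x. x \<in> S \<Longrightarrow> g x = Zsum t x"
    using g by (simp add: Zsum_a sums_iff)
  ultimately show ?thesis by (rule has_field_derivative_transform_within_open[OF _ oS qS])
qed

lemma P_deriv:
  assumes t: "t \<ge> 0" and q: "q < 0"
  shows "((\<lambda>q'. P t q') has_real_derivative (Zsum1 t q / Zsum t q)) (at q)"
proof -
  have "((\<lambda>q'. ln (Zsum t q')) has_real_derivative (1 / Zsum t q * Zsum1 t q)) (at q)"
    by (rule DERIV_chain2[OF DERIV_ln_divide[OF Zsum_pos[OF t q]] Zsum_deriv[OF t q]])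
  then show ?thesis by (simp add: P_def)
qed

lemma dPdq_eq: "t \<ge> 0 \<Longrightarrow> q < 0 \<Longrightarrow> dPdq t q = Zsum1 t q / Zsum t q"
  unfolding dPdq_def by (rule DERIV_imp_deriv[OF P_deriv])


lemma a_le1: "t \<ge> 0 \<Longrightarrow> q < 0 \<Longrightarrow> a t q n \<le> 1"
  using a_le[of t q n] by (smt (verit) exp_le_one_iff mult_pos_neg zero_less_power)

lemma Z1_lower:
  assumes t: "t \<ge> 0" and q: "q < 0"
  shows "Zsum1 t q \<ge> 2 ^ N * (Zsum t q - N)"
proof -
  have s1: "summable (\<lambda>n. 2 ^ Suc n * a t q n)" by (rule summable_a2[OF t q])
  have s0: "summable (a t q)" by (rule summable_a[OF t q])
  have s1N: "summable (\<lambda>n. 2 ^ Suc (n + N) * a t q (n + N))"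
    using s1 by (subst summable_iff_shift) 
  have s0N: "summable (\<lambda>n. a t q (n + N))"
    using s0 by (subst summable_iff_shift) 
  have "Zsum1 t q = (\<Sum>n. 2 ^ Suc (n + N) * a t q (n + N)) + (\<Sum>i<N. 2 ^ Suc i * a t q i)"
    unfolding Zsum1_a by (rule suminf_split_initial_segment[OF s1])
  also have "\<dots> \<ge> (\<Sum>n. 2 ^ Suc (n + N) * a t q (n + N))"
    using a_nonneg by (simp add: sum_nonneg)
  also have "(\<Sum>n. 2 ^ Suc (n + N) * a t q (n + N)) \<ge> (\<Sum>n. 2 ^ N * a t q (n + N))"
  proof (rule suminf_le[OF _ summable_mult[OF s0N] s1N])
    fix n
    have "(2::real) ^ N \<le> 2 ^ Suc (n + N)" by (rule power_increasing) auto
    then show "2 ^ N * a t q (n + N) \<le> 2 ^ Suc (n + N) * a t q (n + N)"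
      by (intro mult_right_mono a_nonneg)
  qed
  also have "(\<Sum>n. 2 ^ N * a t q (n + N)) = 2 ^ N * (Zsum t q - (\<Sum>i<N. a t q i))"
    using suminf_split_initial_segment[OF s0, of N] suminf_mult[OF s0N, of "2^N"]
    by (simp add: Zsum_a)
  also have "(\<Sum>i<N. a t q i) \<le> (\<Sum>i<N. 1)" by (intro sum_mono a_le1[OF t q])
  then have "2 ^ N * (Zsum t q - N) \<le> 2 ^ N * (Zsum t q - (\<Sum>i<N. a t q i))" by simp
  finally show ?thesis by simp
qed

lemma Z1_diff:
  assumes t: "t \<ge> 0" and q: "q < 0"
  shows "Zsum1 t q - 2 * Zsum t q = (\<Sum>n. (2 ^ Suc n - 2) * a t q n)"
proof -
  have "Zsum1 t q - 2 * Zsum t q = (\<Sum>n. 2 ^ Suc n * a t q n - 2 * a t q n)"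
    unfolding Zsum1_a Zsum_a
    using suminf_diff[OF summable_a2[OF t q] summable_mult[OF summable_a[OF t q], of 2]]
       suminf_mult[OF summable_a[OF t q], of 2] by simp
  then show ?thesis by (simp add: algebra_simps)
qed

lemma summable_diff_a: "t \<ge> 0 \<Longrightarrow> q < 0 \<Longrightarrow> summable (\<lambda>n. (2 ^ Suc n - 2) * a t q n)"
  using summable_diff[OF summable_a2 summable_mult[OF summable_a, of _ _ 2]]
  by (simp add: algebra_simps)

lemma ratio_gt2:
  assumes t: "t \<ge> 0" and q: "q < 0"
  shows "Zsum1 t q / Zsum t q > 2"
proof -
  have "(\<Sum>n. (2 ^ Suc n - 2) * a t q n) > 0"
  proof (rule suminf_pos2[OF summable_diff_a[OF t q], of 1])
    fix n
    have "(2::real) \<le> 2 ^ Suc n" using power_increasing[of 1 "Suc n" "2::real"] by simp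
    then show "0 \<le> (2 ^ Suc n - 2) * a t q n" using a_nonneg by simp
  next
    show "0 < (2 ^ Suc 1 - 2) * a t q 1" using a_pos by simp
  qed
  then have "Zsum1 t q > 2 * Zsum t q" using Z1_diff[OF t q] by simp
  then show ?thesis using Zsum_pos[OF t q] by (simp add: field_simps)
qed


lemma term_bound:
  assumes t: "t \<ge> 0" and q: "q < 0"
  shows "(2 ^ Suc n - 2) * a t q n / a t q 0 \<le> 4 / q^2 * (1/2) ^ n"
proof (cases n)
  case 0 then show ?thesis by simp
next
  case (Suc m)
  define y :: real where "y = 2 ^ Suc n - 2"
  have y2: "y \<ge> 2 ^ n" unfolding y_def using Suc by simp
  have ypos: "y > 0" using y2 by (smt (verit) zero_less_power)
  have "a t q n / a t q 0 = 2 powr (- real (Suc n) * t + t) * exp (y * q)"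
  proof -
    have e1: "2 powr (- real (Suc n) * t + t) = 2 powr (- real (Suc n) * t) / 2 powr (- real (Suc 0) * t)"
      by (simp add: powr_diff[symmetric])
    have e2: "exp (y*q) = exp (2^Suc n * q) / exp (2^Suc 0 * q)"
      by (simp add: exp_diff[symmetric] y_def algebra_simps)
    show ?thesis unfolding e1 e2 a_def by simp
  qed
  also have "\<dots> \<le> exp (y * q)"
  proof -
    have "- real (Suc n) * t + t \<le> 0" using t by (simp add: algebra_simps mult_nonneg_nonneg)
    then have "2 powr (- real (Suc n) * t + t) \<le> 2 powr 0" by (intro powr_mono) auto
    then show ?thesis using mult_right_mono[of _ 1 "exp (y*q)"] by simp
  qed
  finally have "y * (a t q n / a t q 0) \<le> y * exp (y * q)"
    using ypos by (metis less_eq_real_def mult_left_mono)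
  then have "(2 ^ Suc n - 2) * a t q n / a t q 0 \<le> y * exp (y * q)"
    by (simp add: y_def times_divide_eq_right)
  also have "\<dots> \<le> 4 / (y * q^2)" by (rule cexp_bound[OF ypos q])
  also have "\<dots> \<le> 4 / (2^n * q^2)" using y2 q ypos by (intro divide_left_mono mult_right_mono) auto
  also have "\<dots> = 4 / q^2 * (1/2) ^ n" by (simp add: power_one_over field_simps)
  finally show ?thesis .
qed

lemma ratio_upper:
  assumes t: "t \<ge> 0" and q: "q < 0"
  shows "Zsum1 t q / Zsum t q - 2 \<le> 8 / q^2"
proof -
  let ?f = "\<lambda>n. (2 ^ Suc n - 2) * a t q n"
  have Zp: "Zsum t q > 0" by (rule Zsum_pos[OF t q])
  have Zge: "Zsum t q \<ge> a t q 0" unfolding Zsum_a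
    using sum_le_suminf[OF summable_a[OF t q], of "{0}"] a_nonneg by simp
  have nn: "(\<Sum>n. ?f n) \<ge> 0"
    using ratio_gt2[OF t q] Z1_diff[OF t q] Zp by (simp add: field_simps)
  have "Zsum1 t q / Zsum t q - 2 = (\<Sum>n. ?f n) / Zsum t q"
    using Z1_diff[OF t q] Zp by (simp add: field_simps)
  also have "\<dots> \<le> (\<Sum>n. ?f n) / a t q 0"
    using nn Zge a_pos[of t q 0] by (intro divide_left_mono) auto
  also have "\<dots> = (\<Sum>n. ?f n / a t q 0)"
    by (rule suminf_divide[OF summable_diff_a[OF t q], symmetric])
  also have "\<dots> \<le> (\<Sum>n. 4 / q^2 * (1/2) ^ n)"
    by (intro suminf_le term_bound[OF t q] summable_divide[OF summable_diff_a[OF t q]]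
        summable_mult summable_geometric) auto
  also have "\<dots> = 8 / q^2"
    using suminf_mult[OF summable_geometric[of "1/2::real"], of "4/q^2"] suminf_geometric[of "1/2::real"]
    by simp
  finally show ?thesis .
qed


lemma part_bot:
  assumes t: "t \<ge> 0"
  shows "((\<lambda>q. dPdq t q) \<longlongrightarrow> 2) at_bot"
proof (rule tendsto_sandwich[where f = "\<lambda>_. 2::real" and h = "\<lambda>q::real. (2::real) + 8 / q^2"])
  have ev: "eventually (\<lambda>q::real. q < 0) at_bot" unfolding eventually_at_bot_dense by auto
  show "eventually (\<lambda>q. 2 \<le> dPdq t q) at_bot"
    using ev by eventually_elim (use ratio_gt2[OF t] dPdq_eq[OF t] in force)
  show "eventually (\<lambda>q. dPdq t q \<le> 2 + 8 / q^2) at_bot"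
    using ev by eventually_elim (use ratio_upper[OF t] dPdq_eq[OF t] in force)
  show "((\<lambda>_. 2::real) \<longlongrightarrow> 2) at_bot" by simp
  have "filterlim (\<lambda>q::real. q^2) at_top at_bot"
    by (rule filterlim_pow_at_bot_even) (auto intro: filterlim_ident)
  then have "((\<lambda>q::real. 8 / q^2) \<longlongrightarrow> 0) at_bot"
    by (rule tendsto_divide_0[OF tendsto_const filterlim_at_top_imp_at_infinity])
  then show "((\<lambda>q::real. 2 + 8 / q^2) \<longlongrightarrow> (2::real)) at_bot"
    using tendsto_add[OF tendsto_const[of "2::real"]] by fastforce
qed

lemma a_t0: "a t 0 n = (2 powr (-t)) ^ Suc n"
proof -
  have "(2 powr (-t))^Suc n = (2::real) powr (real (Suc n) * (-t))" by (rule powr_power) simp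
  moreover have e: "- real (Suc n) * t = real (Suc n) * (-t)" by (simp add: algebra_simps)
  have "a t 0 n = 2 powr (real (Suc n) * (-t))"
    unfolding a_def by (simp only: e mult_zero_right exp_zero mult_1_right)
  ultimately show ?thesis by simp
qed

lemma part_left:
  assumes t0: "0 < t" and t1: "t \<le> 1"
  shows "filterlim (\<lambda>q. dPdq t q) at_top (at_left 0)"
proof -
  have t: "t \<ge> 0" using t0 by simp
  have r: "2 powr (-t) < 1" using t0 powr_less_mono[of "-t" 0 2] by simp
  have sC: "summable (a t 0)" unfolding a_t0
    using r by (intro summable_Suc_iff[THEN iffD2] summable_geometric) auto
  define C where "C = suminf (a t 0)"
  have Zle: "Zsum t q \<le> C" if q: "q < 0" for q
    unfolding Zsum_a C_def
  proof (rule suminf_le[OF _ summable_a[OF t q] sC])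
    fix n show "a t q n \<le> a t 0 n" unfolding a_def using q by (simp add: mult_nonpos_nonneg)
  qed
  have Z1ge: "Zsum1 t q \<ge> (\<Sum>n<K. exp (2 ^ Suc n * q))" if q: "q < 0" for q K
  proof -
    have "(\<Sum>n<K. exp (2 ^ Suc n * q)) \<le> (\<Sum>n<K. 2 ^ Suc n * a t q n)"
    proof (rule sum_mono)
      fix n
      have e: "2 ^ Suc n * a t q n = 2 powr (- real (Suc n) * (t - 1)) * exp (2 ^ Suc n * q)"
      proof -
        have "2 powr (- real (Suc n) * (t - 1)) = 2 powr (real (Suc n)) * 2 powr (- real (Suc n) * t)"
          by (simp add: powr_add[symmetric] algebra_simps)
        moreover have "2 powr real (Suc n) = (2::real) ^ Suc n" by (rule powr_realpow) simp
        ultimately show ?thesis by (simp add: a_def)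
      qed
      have "0 \<le> - real (Suc n) * (t - 1)" using t1 by (simp add: mult_nonpos_nonpos)
      then have "2 powr 0 \<le> 2 powr (- real (Suc n) * (t - 1))" by (intro powr_mono) auto
      then show "exp (2 ^ Suc n * q) \<le> 2 ^ Suc n * a t q n"
        unfolding e using mult_right_mono[of 1 _ "exp (2 ^ Suc n * q)"] by simp
    qed
    also have "\<dots> \<le> Zsum1 t q" unfolding Zsum1_a
      by (rule sum_le_suminf[OF summable_a2[OF t q]]) (auto simp: a_nonneg)
    finally show ?thesis .
  qed
  have Cpos: "C > 0" using Zsum_pos[OF t, of "-1"] Zle[of "-1"] by simp
  show ?thesis
  proof (subst filterlim_at_top, intro allI)
    fix M :: real
    define K where "K = Suc (nat \<lceil>M * C\<rceil>)"
    have K: "real K > M * C" unfolding K_def by linarith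
    have "((\<lambda>q::real. \<Sum>n<K. exp (2 ^ Suc n * q)) \<longlongrightarrow> (\<Sum>n<K. exp (2 ^ Suc n * 0))) (at_left 0)"
      by (intro tendsto_intros)
    then have "((\<lambda>q::real. \<Sum>n<K. exp (2 ^ Suc n * q)) \<longlongrightarrow> real K) (at_left 0)" by simp
    then have ev1: "eventually (\<lambda>q. M * C < (\<Sum>n<K. exp (2 ^ Suc n * q))) (at_left 0)"
      using K by (rule order_tendstoD(1))
    have ev2: "eventually (\<lambda>q::real. q \<in> {-1<..<0}) (at_left 0)" by (rule eventually_at_left_real) simp
    show "eventually (\<lambda>q. M \<le> dPdq t q) (at_left 0)"
      using ev1 ev2
    proof eventually_elim
      case (elim q)
      then have q: "q < 0" by simp
      have Z1: "Zsum1 t q > M * C" using elim(1) Z1ge[OF q, of K] by simp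
      have Zp: "Zsum t q > 0" by (rule Zsum_pos[OF t q])
      have "M \<le> Zsum1 t q / C" using Z1 Cpos by (simp add: field_simps)
      also have "\<dots> \<le> Zsum1 t q / Zsum t q"
        using Zp Zle[OF q] Z1 ratio_gt2[OF t q]
        by (intro divide_left_mono) (auto simp: field_simps)
      finally show ?case using dPdq_eq[OF t q] by simp
    qed
  qed
qed


lemma part_00: "filterlim (\<lambda>(t, q). dPdq t q) at_top (at (0, 0) within D1)"
proof (subst filterlim_at_top, intro allI)
  fix M :: real
  obtain N :: nat where N: "2 * \<bar>M\<bar> < 2 ^ N" using real_arch_pow[of 2 "2 * \<bar>M\<bar>"] by auto
  define K where "K = Suc (2 * N)"
  have "((\<lambda>x::real\<times>real. \<Sum>n<K. a (fst x) (snd x) n) \<longlongrightarrow> (\<Sum>n<K. a (fst (0::real,0::real)) (snd (0::real,0::real)) n)) (at (0, 0) within D1)"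
    unfolding a_def by (intro tendsto_intros) auto
  then have "((\<lambda>x::real\<times>real. \<Sum>n<K. a (fst x) (snd x) n) \<longlongrightarrow> real K) (at (0, 0) within D1)"
    by (simp add: a_def)
  then have ev1: "eventually (\<lambda>x::real\<times>real. 2 * real N < (\<Sum>n<K. a (fst x) (snd x) n)) (at (0, 0) within D1)"
    by (rule order_tendstoD(1)) (simp add: K_def)
  have ev2: "eventually (\<lambda>x. x \<in> D1) (at (0::real, 0::real) within D1)"
    by (simp add: eventually_at_filter)
  show "eventually (\<lambda>x. M \<le> (case x of (t, q) \<Rightarrow> dPdq t q)) (at (0, 0) within D1)"
    using ev1 ev2
  proof eventually_elim
    case (elim x)
    obtain t q where x: "x = (t, q)" by (cases x)
    have t: "t \<ge> 0" and q: "q < 0" using elim(2) x by (auto simp: D1_def)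
    have "(\<Sum>n<K. a t q n) \<le> Zsum t q" unfolding Zsum_a
      by (rule sum_le_suminf[OF summable_a[OF t q]]) (auto simp: a_nonneg)
    then have ZN: "Zsum t q > 2 * real N" using elim(1) x by simp
    have Z1: "Zsum1 t q \<ge> 2 ^ N * (Zsum t q - N)" by (rule Z1_lower[OF t q])
    have "Zsum t q - N \<ge> Zsum t q / 2" using ZN by simp
    then have "Zsum1 t q \<ge> 2 ^ N * (Zsum t q / 2)" using Z1
      by (smt (verit) mult_left_mono zero_le_power)
    then have "Zsum1 t q / Zsum t q \<ge> 2 ^ N / 2" using ZN by (simp add: field_simps)
    then have "M \<le> Zsum1 t q / Zsum t q" using N by linarith
    then show ?case using x dPdq_eq[OF t q] by simp
  qed
qed

theorem proposition5p2:
  shows "(\<forall>t q. (t, q) \<in> D1 \<longrightarrow>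
            ((\<lambda>q'. P t q') has_real_derivative (Zsum1 t q / Zsum t q)) (at q))
     \<and> (\<forall>t. 0 < t \<and> t \<le> 1 \<longrightarrow> filterlim (\<lambda>q. dPdq t q) at_top (at_left 0))
     \<and> filterlim (\<lambda>(t, q). dPdq t q) at_top (at (0, 0) within D1)
     \<and> (\<forall>t q. (t, q) \<in> D1 \<longrightarrow> dPdq t q > 2)
     \<and> (\<forall>t. t \<ge> 0 \<longrightarrow> ((\<lambda>q. dPdq t q) \<longlongrightarrow> 2) at_bot)"
  using P_deriv part_left part_00 ratio_gt2 dPdq_eq part_bot by (auto simp: D1_def)

end
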